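(* For integers $0\le l\le m$, $$d_{l,m}=\frac{1}{l!\,m!\,2^{m+l}}\left(\alpha_{l}(m)\prod_{k=1}^{m}(4k-1)-\beta_{l}(m)\prod_{k=1}^{m}(4k+1)\right),$$ where $$\alpha_{l}(m)=\sum_{t=0}^{\lfloor l/2\rfloor}\binom{l}{2t}\prod_{\nu=m+1}^{m+t}(4\nu-1)\prod_{\nu=m-l+2t+1}^{m}(2\nu+1)\prod_{\nu=1}^{t-1}(4\nu+1),$$ $$\beta_{l}(m)=\sum_{t=1}^{\lfloor (l+1)/2\rfloor}\binom{l}{2t-1}\prod_{\nu=m+1}^{m+t-1}(4\nu+1)\prod_{\nu=m-l+2t}^{m}(2\nu+1)\prod_{\nu=1}^{t-1}(4\nu-1).$$ In particular $m!\,2^{m+1}d_{1,m}=(2m+1)\prod_{k=1}^{m}(4k-1)-\prod_{k=1}^{m}(4k+1)$; here $\alpha_l$ and $\beta_l$ are polynomials in $m$ of degrees $l$ and $l-1$ respectively.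
   Context: $d_{l,m}=2^{-2m}\sum_{k=l}^{m}2^{k}\binom{2m-2k}{m-k}\binom{m+k}{m}\binom{k}{l}$. Empty products (upper index smaller than lower index) equal $1$ and empty sums equal $0$. *)

theory Defs
  imports "HOL-Computational_Algebra.Polynomial"
begin

text \<open>Products over integer ranges {a..b}; empty (=1) when b < a.\<close>

definition dd :: "nat \<Rightarrow> nat \<Rightarrow> real" where
  "dd l m = (1 / 2 ^ (2*m)) *
     (\<Sum>k = l..m. 2 ^ k * real ((2*m - 2*k) choose (m - k)) * real ((m + k) choose m)
                   * real (k choose l))"

definition alpha :: "nat \<Rightarrow> nat \<Rightarrow> real" where
  "alpha l m = (\<Sum>t = 0..l div 2. real (l choose (2*t))
     * (\<Prod>\<nu>\<in>{int m + 1 .. int m + int t}. real_of_int (4*\<nu> - 1))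
     * (\<Prod>\<nu>\<in>{int m - int l + 2 * int t + 1 .. int m}. real_of_int (2*\<nu> + 1))
     * (\<Prod>\<nu>\<in>{1 .. int t - 1}. real_of_int (4*\<nu> + 1)))"

definition beta :: "nat \<Rightarrow> nat \<Rightarrow> real" where
  "beta l m = (\<Sum>t = 1..(l + 1) div 2. real (l choose (2*t - 1))
     * (\<Prod>\<nu>\<in>{int m + 1 .. int m + int t - 1}. real_of_int (4*\<nu> + 1))
     * (\<Prod>\<nu>\<in>{int m - int l + 2 * int t .. int m}. real_of_int (2*\<nu> + 1))
     * (\<Prod>\<nu>\<in>{1 .. int t - 1}. real_of_int (4*\<nu> - 1)))"

end

theory Submission
  imports Defs
begin


declare binomial_Suc_Suc[simp del]

definition FF :: "nat \<Rightarrow> nat \<Rightarrow> real" where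
  "FF m k = 2^k * real ((2*m-2*k) choose (m-k)) * real ((m+k) choose m)"

lemma cen: "real (Suc j) * real ((2*j+2) choose (j+1)) = 2*(2*real j+1)* real ((2*j) choose j)"
proof -
  have a: "Suc j * ((2*j+2) choose (j+1)) = (2*j+2) * ((2*j+1) choose j)"
    using Suc_times_binomial[of j "2*j+1"] by simp
  have b: "(2*j+1 - j) * ((2*j+1) choose j) = (2*j+1) * ((2*j) choose j)"
    using binomial_absorb_comp[of "2*j+1" j] by simp
  have b': "(j+1) * ((2*j+1) choose j) = (2*j+1) * ((2*j) choose j)"
    using b by (simp add: Suc_diff_le)
  have "Suc j * ((2*j+2) choose (j+1)) = 2 * ((j+1) * ((2*j+1) choose j))"
    using a by (simp add: algebra_simps)
  also have "\<dots> = 2*(2*j+1) * ((2*j) choose j)" using b' by simp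
  finally have "real (Suc j * ((2*j+2) choose (j+1))) = real (2*(2*j+1) * ((2*j) choose j))" by metis
  thus ?thesis by (simp only: of_nat_mult of_nat_add of_nat_numeral of_nat_1)
qed

lemma r2: "real (Suc k) * real ((m+k+1) choose m) = real (m+k+1) * real ((m+k) choose m)"
proof -
  have "(m+k+1 - m) * ((m+k+1) choose m) = (m+k+1) * ((m+k+1-1) choose m)"
    by (rule binomial_absorb_comp)
  hence "Suc k * ((m+k+1) choose m) = (m+k+1) * ((m+k) choose m)" by simp
  hence "real (Suc k * ((m+k+1) choose m)) = real ((m+k+1) * ((m+k) choose m))" by metis
  thus ?thesis by (simp only: of_nat_mult)
qed

lemma r3: "real (Suc k) * real ((j+2*k+1) choose (j+k)) = real (j+2*k+1) * real ((j+2*k) choose (j+k))"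
proof -
  have "(j+2*k+1 - (j+k)) * ((j+2*k+1) choose (j+k)) = (j+2*k+1) * ((j+2*k+1-1) choose (j+k))"
    by (rule binomial_absorb_comp)
  hence "Suc k * ((j+2*k+1) choose (j+k)) = (j+2*k+1) * ((j+2*k) choose (j+k))"
    by (simp add: Suc_diff_le)
  hence "real (Suc k * ((j+2*k+1) choose (j+k))) = real ((j+2*k+1) * ((j+2*k) choose (j+k)))" by metis
  thus ?thesis by (simp only: of_nat_mult)
qed

lemma r1: "real (j+k+1) * real ((j+2*k+1) choose (j+k+1)) = real (j+2*k+1) * real ((j+2*k) choose (j+k))"
proof -
  have "Suc (j+k) * (Suc (j+2*k) choose Suc (j+k)) = Suc (j+2*k) * ((j+2*k) choose (j+k))"
    by (rule Suc_times_binomial)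
  hence "real (Suc (j+k) * (Suc (j+2*k) choose Suc (j+k))) = real (Suc (j+2*k) * ((j+2*k) choose (j+k)))" by metis
  thus ?thesis by (simp only: of_nat_mult Suc_eq_plus1)
qed

lemma solve: "(c::real) \<noteq> 0 \<Longrightarrow> c * y = d \<Longrightarrow> y = d / c" by (simp add: field_simps)

definition G0 :: "nat \<Rightarrow> nat \<Rightarrow> real" where
  "G0 m k = -2*real k*2^k*real ((2*m+2-2*k) choose (m+1-k))*real ((m+k) choose m)"

lemma perk0:
  assumes "k \<le> m"
  shows "real (m+1)*FF (m+1) k - 2*(4*real m+3)*FF m k = G0 m (k+1) - G0 m k"
proof -
  obtain j where m: "m = j + k" using assms le_Suc_ex by (metis add.commute)
  define a where "a = real ((2*j) choose j)"
  define x where "x = real ((2*j+2) choose (j+1))"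
  define b where "b = real ((j+2*k) choose (j+k))"
  define y1 where "y1 = real ((j+2*k+1) choose (j+k+1))"
  define y2 where "y2 = real ((j+2*k+1) choose (j+k))"
  have e1: "2*(j+k+1)-2*k = 2*j+2" "j+k+1-k = j+1" "j+k+1+k = j+2*k+1" by auto
  have f1: "FF (j+k+1) k = 2^k * x * y1" unfolding FF_def x_def y1_def by (simp only: e1)
  have e2: "2*(j+k)-2*k = 2*j" "j+k-k = j" "j+k+k = j+2*k" by auto
  have f2: "FF (j+k) k = 2^k * a * b" unfolding FF_def a_def b_def by (simp only: e2)
  have e3: "2*(j+k)+2-2*(k+1) = 2*j" "j+k+1-(k+1) = j" "j+k+(k+1) = j+2*k+1" by auto
  have g1: "G0 (j+k) (k+1) = -2*real (k+1)*2^(k+1)*a*y2" unfolding G0_def a_def y2_def by (simp only: e3)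
  have e4: "2*(j+k)+2-2*k = 2*j+2" "j+k+1-k = j+1" "j+k+k = j+2*k" by auto
  have g2: "G0 (j+k) k = -2*real k*2^k*x*b" unfolding G0_def x_def b_def by (simp only: e4)
  have c1: "real (Suc j)*x - 2*(2*real j+1)*a = 0" using cen[of j] unfolding x_def a_def by simp
  have c2: "real (j+k+1)*y1 - real (j+2*k+1)*b = 0" using r1[of j k] unfolding y1_def b_def by simp
  have c3: "real (Suc k)*y2 - real (j+2*k+1)*b = 0" using r3[of k j] unfolding y2_def b_def by simp
  have "(real (j+k+1)*FF (j+k+1) k - 2*(4*real (j+k)+3)*FF (j+k) k) - (G0 (j+k) (k+1) - G0 (j+k) k)
    = 2^k*b*(real (Suc j)*x - 2*(2*real j+1)*a) + 2^k*x*(real (j+k+1)*y1 - real (j+2*k+1)*b)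
      + 4*2^k*a*(real (Suc k)*y2 - real (j+2*k+1)*b)"
    unfolding f1 f2 g1 g2 by (simp add: algebra_simps)
  then show ?thesis unfolding m c1 c2 c3 by simp
qed

definition G1 :: "nat \<Rightarrow> nat \<Rightarrow> real" where
  "G1 m k = (2*real m+3-2*real k) * G0 m k"

lemma perk1_alg: fixes J K P a x b y1 y2 :: real
  assumes h1: "(J+1)*x - 2*(2*J+1)*a = 0" and h2: "(J+K+1)*y1 - (J+2*K+1)*b = 0"
    and h3: "(K+1)*y2 - (J+2*K+1)*b = 0"
  shows "(J+K+1)*(2*(J+K)+3-2*K)*(P*x*y1) - 2*(4*(J+K)+5)*(2*(J+K)+1-2*K)*(P*a*b) = (2*(J+K)+3-2*(K+1))*(-2*(K+1)*(2*P)*a*y2) - (2*(J+K)+3-2*K)*(-2*K*P*x*b)"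
proof -
  have "((J+K+1)*(2*(J+K)+3-2*K)*(P*x*y1) - 2*(4*(J+K)+5)*(2*(J+K)+1-2*K)*(P*a*b)) - ((2*(J+K)+3-2*(K+1))*(-2*(K+1)*(2*P)*a*y2) - (2*(J+K)+3-2*K)*(-2*K*P*x*b))
    = (2*J+3)*P*b*((J+1)*x - 2*(2*J+1)*a) + (2*J+3)*P*x*((J+K+1)*y1 - (J+2*K+1)*b)
      + 4*(2*J+1)*P*a*((K+1)*y2 - (J+2*K+1)*b)"
    by (simp add: algebra_simps)
  then show ?thesis unfolding h1 h2 h3 by simp
qed

lemma perk1:
  assumes "k \<le> m"
  shows "real (m+1)*(2*real m+3-2*real k)*FF (m+1) k - 2*(4*real m+5)*(2*real m+1-2*real k)*FF m k = G1 m (k+1) - G1 m k"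
proof -
  obtain j where m: "m = j + k" using assms le_Suc_ex by (metis add.commute)
  define a where "a = real ((2*j) choose j)"
  define x where "x = real ((2*j+2) choose (j+1))"
  define b where "b = real ((j+2*k) choose (j+k))"
  define y1 where "y1 = real ((j+2*k+1) choose (j+k+1))"
  define y2 where "y2 = real ((j+2*k+1) choose (j+k))"
  have e1: "2*(j+k+1)-2*k = 2*j+2" "j+k+1-k = j+1" "j+k+1+k = j+2*k+1" by auto
  have f1: "FF (j+k+1) k = 2^k * x * y1" unfolding FF_def x_def y1_def by (simp only: e1)
  have e2: "2*(j+k)-2*k = 2*j" "j+k-k = j" "j+k+k = j+2*k" by auto
  have f2: "FF (j+k) k = 2^k * a * b" unfolding FF_def a_def b_def by (simp only: e2)
  have e3: "2*(j+k)+2-2*(k+1) = 2*j" "j+k+1-(k+1) = j" "j+k+(k+1) = j+2*k+1" by auto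
  have g1: "G0 (j+k) (k+1) = -2*real (k+1)*2^(k+1)*a*y2" unfolding G0_def a_def y2_def by (simp only: e3)
  have e4: "2*(j+k)+2-2*k = 2*j+2" "j+k+1-k = j+1" "j+k+k = j+2*k" by auto
  have g2: "G0 (j+k) k = -2*real k*2^k*x*b" unfolding G0_def x_def b_def by (simp only: e4)
  have c1: "(real j+1)*x - 2*(2*real j+1)*a = 0" using cen[of j] unfolding x_def[symmetric] a_def[symmetric] by (simp add: algebra_simps)
  have c2: "(real j+real k+1)*y1 - (real j+2*real k+1)*b = 0" using r1[of j k] unfolding y1_def[symmetric] b_def[symmetric] by (simp add: algebra_simps)
  have c3: "(real k+1)*y2 - (real j+2*real k+1)*b = 0" using r3[of k j] unfolding y2_def[symmetric] b_def[symmetric] by (simp add: algebra_simps)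
  have pw: "(2::real)^(k+1) = 2*2^k" by simp
  show ?thesis unfolding m G1_def e1[symmetric] f1 f2 g1 g2
    unfolding of_nat_add of_nat_1 pw of_nat_mult of_nat_numeral
    by (rule perk1_alg[OF c1 c2 c3])
qed

lemma last0: "real (m+1)*FF (m+1) (m+1) = - G0 m (m+1)"
proof -
  define A where "A = (m+1+(m+1)) choose (m+1)"
  define B where "B = (m+(m+1)) choose m"
  define X where "X = real A"
  define Y where "Y = real B"
  have h1: "m+1+(m+1) = Suc (2*m+1)" "m+1 = Suc m" "m+(m+1) = 2*m+1" by simp_all
  have eA: "A = Suc (2*m+1) choose Suc m" unfolding A_def h1(1)[symmetric] h1(2)[symmetric] ..
  have eB: "B = (2*m+1) choose m" unfolding B_def h1(3) ..
  have "Suc m * A = Suc (2*m+1) * B" unfolding eA eB by (rule Suc_times_binomial)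
  hence "Suc m * A = Suc m * (2 * B)" by simp
  hence "A = 2 * B" by (metis mult_left_cancel nat.distinct(1))
  hence h: "X = 2 * Y" unfolding X_def Y_def by simp
  have e: "2*m+2-2*(m+1) = 0" "2*(m+1)-2*(m+1) = 0" "m+1-(m+1) = 0" by simp_all
  have f: "FF (m+1) (m+1) = 2^(m+1) * X" unfolding FF_def X_def A_def
    by (simp only: e binomial_n_0 of_nat_1 mult_1_right)
  have g: "G0 m (m+1) = -2*real (m+1)*2^(m+1) * Y" unfolding G0_def Y_def B_def
    by (simp only: e binomial_n_0 of_nat_1 mult_1_right)
  have aux: "\<And>a p y::real. a*(p*(2*y)) = -(-2*a*p*y)" by (simp add: algebra_simps)
  show ?thesis unfolding f g h by (rule aux)
qed

lemma G0_zero: "G0 m 0 = 0" unfolding G0_def of_nat_0 by (simp only: mult_zero_right mult_zero_left)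
lemma G1_zero: "G1 m 0 = 0" by (simp add: G1_def G0_zero)
lemma last1: "real (m+1)*FF (m+1) (m+1) = - G1 m (m+1)"
  unfolding G1_def last0 by simp

definition E0 :: "nat \<Rightarrow> real" where "E0 m = (\<Sum>k\<le>m. FF m k)"
definition Y0 :: "nat \<Rightarrow> real" where "Y0 m = (\<Sum>k\<le>m. (2*real m+1-2*real k)*FF m k)"

lemma rec0: "real (m+1) * E0 (m+1) = 2*(4*real m+3) * E0 m"
proof -
  have "real (m+1) * E0 (m+1) = (\<Sum>k<Suc m. real (m+1)*FF (m+1) k) + real (m+1)*FF (m+1) (m+1)"
    unfolding E0_def Suc_eq_plus1[symmetric] sum.atMost_Suc lessThan_Suc_atMost distrib_left sum_distrib_left ..
  also have "(\<Sum>k<Suc m. real (m+1)*FF (m+1) k) = (\<Sum>k<Suc m. 2*(4*real m+3)*FF m k + (G0 m (Suc k) - G0 m k))"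
  proof (rule sum.cong[OF refl])
    fix k assume "k \<in> {..<Suc m}" hence "k \<le> m" by simp
    from perk0[OF this] show "real (m+1)*FF (m+1) k = 2*(4*real m+3)*FF m k + (G0 m (Suc k) - G0 m k)"
      by (simp add: algebra_simps)
  qed
  also have "\<dots> = 2*(4*real m+3) * E0 m + (G0 m (Suc m) - G0 m 0)"
    unfolding E0_def sum.distrib sum_lessThan_telescope by (simp add: sum_distrib_left lessThan_Suc_atMost)
  finally show ?thesis using last0[of m] G0_zero[of m] by simp
qed

lemma rec1: "real (m+1) * Y0 (m+1) = 2*(4*real m+5) * Y0 m"
proof -
  have "real (m+1) * Y0 (m+1) = (\<Sum>k\<le>m. real (Suc m)*((2*real (Suc m)+1-2*real k)*FF (Suc m) k)) + real (Suc m)*((2*real (Suc m)+1-2*real (Suc m))*FF (Suc m) (Suc m))"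
    unfolding Y0_def Suc_eq_plus1[symmetric] sum.atMost_Suc distrib_left sum_distrib_left ..
  also have "\<dots> = (\<Sum>k<Suc m. real (m+1)*(2*real m+3-2*real k)*FF (m+1) k) + real (m+1)*FF (m+1) (m+1)"
    unfolding lessThan_Suc_atMost by (simp add: algebra_simps)
  also have "(\<Sum>k<Suc m. real (m+1)*(2*real m+3-2*real k)*FF (m+1) k) = (\<Sum>k<Suc m. 2*(4*real m+5)*((2*real m+1-2*real k)*FF m k) + (G1 m (Suc k) - G1 m k))"
  proof (rule sum.cong[OF refl])
    fix k assume "k \<in> {..<Suc m}" hence "k \<le> m" by simp
    from perk1[OF this] show "real (m+1)*(2*real m+3-2*real k)*FF (m+1) k = 2*(4*real m+5)*((2*real m+1-2*real k)*FF m k) + (G1 m (Suc k) - G1 m k)"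
      by (simp add: algebra_simps)
  qed
  also have "\<dots> = 2*(4*real m+5) * Y0 m + (G1 m (Suc m) - G1 m 0)"
    unfolding Y0_def sum.distrib sum_lessThan_telescope by (simp add: sum_distrib_left lessThan_Suc_atMost)
  finally show ?thesis using last1[of m] G1_zero[of m] by simp
qed

lemma E0_closed: "fact m * E0 m = 2^m * (\<Prod>k=1..m. real (4*k-1))"
proof (induction m)
  case 0 show ?case by (simp add: E0_def FF_def)
next
  case (Suc m)
  have "fact (Suc m) * E0 (Suc m) = fact m * (real (m+1) * E0 (m+1))" by (simp add: algebra_simps)
  also have "\<dots> = 2*(4*real m+3) * (fact m * E0 m)" unfolding rec0 by (simp add: algebra_simps)
  also have "\<dots> = 2^(Suc m) * (\<Prod>k=1..Suc m. real (4*k-1))"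
  proof -
    have p: "(\<Prod>k=1..Suc m. real (4*k-1)) = (\<Prod>k=1..m. real (4*k-1)) * (4*real m+3)"
      by (simp add: prod.nat_ivl_Suc')
    show ?thesis unfolding Suc.IH p by (simp only: power_Suc mult_ac)
  qed
  finally show ?case .
qed

lemma Y0_closed: "fact m * Y0 m = 2^m * (\<Prod>k=1..m. real (4*k+1))"
proof (induction m)
  case 0 show ?case by (simp add: Y0_def FF_def)
next
  case (Suc m)
  have "fact (Suc m) * Y0 (Suc m) = fact m * (real (m+1) * Y0 (m+1))" by (simp add: algebra_simps)
  also have "\<dots> = 2*(4*real m+5) * (fact m * Y0 m)" unfolding rec1 by (simp add: algebra_simps)
  also have "\<dots> = 2^(Suc m) * (\<Prod>k=1..Suc m. real (4*k+1))"
  proof -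
    have p: "(\<Prod>k=1..Suc m. real (4*k+1)) = (\<Prod>k=1..m. real (4*k+1)) * (4*real m+5)"
      by (simp add: prod.nat_ivl_Suc')
    show ?thesis unfolding Suc.IH p by (simp only: power_Suc mult_ac)
  qed
  finally show ?case .
qed




lemma r4: "real (Suc l) * real (k choose Suc l) = (real k - real l) * real (k choose l)"
proof (cases k)
  case 0 then show ?thesis by (cases l) auto
next
  case (Suc n)
  have a: "Suc l * (Suc n choose Suc l) = Suc n * (n choose l)" by (rule Suc_times_binomial)
  have b: "(Suc n - l) * (Suc n choose l) = Suc n * ((Suc n - 1) choose l)" by (rule binomial_absorb_comp)
  have c: "Suc l * (k choose Suc l) = (k - l) * (k choose l)" using a b Suc by simp
  show ?thesis
  proof (cases "l \<le> k")
    case True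
    then show ?thesis using arg_cong[OF c, of real] by (simp only: of_nat_mult of_nat_diff)
  next
    case False
    then show ?thesis by (simp add: binomial_eq_0)
  qed
qed

definition tt :: "nat \<Rightarrow> nat \<Rightarrow> nat \<Rightarrow> real" where
  "tt m l k = FF m k * real (k choose l)"
definition gg :: "nat \<Rightarrow> nat \<Rightarrow> nat \<Rightarrow> real" where
  "gg m l k = 2*(real k - real l)*(real k - real l - 1) - (4*real m+2)*(real k - real l) - 2*(real l - real m)*(real l + real m + 1)"
definition GA :: "nat \<Rightarrow> nat \<Rightarrow> nat \<Rightarrow> real" where
  "GA m l k = 2*tt m l k*(2*real m - 2*real k + 1)*(real k - real l)"

lemma r5: "(real k + 1 - real l) * real (Suc k choose l) = (real k + 1) * real (k choose l)"
proof -
  have "(Suc k - l) * (Suc k choose l) = Suc k * ((Suc k - 1) choose l)" by (rule binomial_absorb_comp)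
  hence c: "(Suc k - l) * (Suc k choose l) = Suc k * (k choose l)" by simp
  show ?thesis
  proof (cases "l \<le> Suc k")
    case True
    then show ?thesis using arg_cong[OF c, of real] by (simp only: of_nat_mult of_nat_diff of_nat_Suc) (simp add: algebra_simps)
  next
    case False
    then show ?thesis by (simp add: binomial_eq_0)
  qed
qed

lemma perkA_alg: fixes J K L a x p p' c c' P :: real shows "(P*x*p*c) * (2*(K-L)*(K-L-1) - (4*(J+K+1)+2)*(K-L) - 2*(L-(J+K+1))*(L+(J+K+1)+1)) - (2*(2*P*a*p'*c')*(2*(J+K+1)-2*(K+1)+1)*((K+1)-L) - 2*(P*x*p*c)*(2*(J+K+1)-2*K+1)*(K-L)) = -(4*P*(2*J+1)*a*p'*((K+1-L)*c' - (K+1)*c) + 4*P*(2*J+1)*a*c*((K+1)*p' - (J+2*K+2)*p) - 2*P*p*c*(J+2*K+2)*((J+1)*x - 2*(2*J+1)*a))"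
  by (simp add: algebra_simps)

lemma perkA:
  assumes "k < m"
  shows "tt m l k * gg m l k = GA m l (k+1) - GA m l k"
proof -
  obtain j where m: "m = j + k + 1" using assms by (metis add.commute add_Suc less_iff_Suc_add plus_1_eq_Suc)
  define a where "a = real ((2*j) choose j)"
  define x where "x = real ((2*j+2) choose (j+1))"
  define p where "p = real ((m+k) choose m)"
  define p' where "p' = real ((m+k+1) choose m)"
  define c where "c = real (k choose l)"
  define c' where "c' = real (Suc k choose l)"
  have e1: "2*(j+k+1)-2*k = 2*j+2" "j+k+1-k = j+1" "2*(j+k+1)-2*(k+1) = 2*j" "j+k+1-(k+1) = j" by auto
  have t1: "tt m l k = 2^k * x * p * c" unfolding tt_def FF_def x_def p_def c_def
    by (simp only: m e1)
  have t2: "tt m l (k+1) = 2^(k+1) * a * p' * c'" unfolding tt_def FF_def a_def p'_def c'_def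
    by (simp only: m e1 add.assoc[symmetric] Suc_eq_plus1)
  have z1: "(real j+1)*x - 2*(2*real j+1)*a = 0" using cen[of j] unfolding x_def[symmetric] a_def[symmetric] by (simp add: algebra_simps)
  have rm: "real m = real j + real k + 1" by (simp add: m)
  have rmk: "real (m+k+1) = real j + 2*real k + 2" by (simp add: m)
  have z2: "(real k+1)*p' - (real j + 2*real k + 2)*p = 0" using r2[of k m] unfolding p'_def[symmetric] p_def[symmetric] rmk by (simp add: algebra_simps)
  have z3: "(real k + 1 - real l)*c' - (real k + 1)*c = 0" using r5[of k l] unfolding c'_def c_def by simp
  have pw: "(2::real)^(k+1) = 2*2^k" by simp
  have rk: "real (k+1) = real k + 1" by simp
  have "tt m l k * gg m l k - (GA m l (k+1) - GA m l k) =
     - (4*2^k*(2*real j+1)*a*p'*((real k + 1 - real l)*c' - (real k + 1)*c)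
       + 4*2^k*(2*real j+1)*a*c*((real k+1)*p' - (real j + 2*real k + 2)*p)
       - 2*2^k*p*c*(real j + 2*real k + 2)*((real j+1)*x - 2*(2*real j+1)*a))"
    unfolding GA_def t1 t2 gg_def rm rk pw by (rule perkA_alg)
  then show ?thesis unfolding z1 z2 z3 by simp
qed

lemma lastA: "tt m l m * gg m l m = - GA m l m"
proof -
  have h: "gg m l m = -2 * (real m - real l)" unfolding gg_def by (simp add: algebra_simps)
  show ?thesis unfolding GA_def h by (simp add: algebra_simps)
qed

lemma GA0: "GA m l 0 = 0"
  unfolding GA_def tt_def by (cases l) auto

lemma sumA: "(\<Sum>k\<le>m. tt m l k * gg m l k) = 0"
proof -
  have "(\<Sum>k\<le>m. tt m l k * gg m l k) = (\<Sum>k<m. tt m l k * gg m l k) + tt m l m * gg m l m"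
    by (simp add: lessThan_Suc_atMost[symmetric])
  also have "(\<Sum>k<m. tt m l k * gg m l k) = (\<Sum>k<m. GA m l (Suc k) - GA m l k)"
    by (rule sum.cong[OF refl]) (simp add: perkA)
  also have "\<dots> = GA m l m - GA m l 0" by (rule sum_lessThan_telescope)
  finally show ?thesis unfolding lastA GA0 by simp
qed

lemma auxE: fixes S1 S2 C0 C1 C2 K L F A B :: real
  assumes h1: "S1*C1 = (K-L)*C0" and h2: "S2*C2 = (K-L-1)*C1"
  shows "2*S2*S1*(F*C2) - A*S1*(F*C1) - B*(F*C0) = F*C0*(2*(K-L)*(K-L-1) - A*(K-L) - B)"
proof -
  have "2*S2*S1*(F*C2) = 2*F*S1*(S2*C2)" by (simp only: ac_simps)
  also have "\<dots> = 2*F*(K-L-1)*(S1*C1)" unfolding h2 by (simp only: ac_simps)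
  also have "\<dots> = 2*F*(K-L-1)*((K-L)*C0)" unfolding h1 ..
  finally have e1: "2*S2*S1*(F*C2) = 2*F*(K-L-1)*((K-L)*C0)" .
  have e2: "A*S1*(F*C1) = A*F*((K-L)*C0)" unfolding h1[symmetric] by (simp only: ac_simps)
  show ?thesis unfolding e1 e2 by (simp add: algebra_simps)
qed

lemma perkE: "2*real (Suc (Suc l))*real (Suc l)*(FF m k*real (k choose Suc (Suc l))) - (4*real m+2)*real (Suc l)*(FF m k*real (k choose Suc l)) - 2*(real l - real m)*(real l+real m+1)*(FF m k*real (k choose l)) = tt m l k * gg m l k"
proof -
  have h1: "real (Suc l)*real (k choose Suc l) = (real k - real l)*real (k choose l)" by (rule r4)
  have h2: "real (Suc (Suc l))*real (k choose Suc (Suc l)) = (real k - real l - 1)*real (k choose Suc l)"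
    using r4[of "Suc l" k] by (simp add: algebra_simps)
  show ?thesis unfolding tt_def gg_def by (rule auxE[OF h1 h2])
qed

definition EL :: "nat \<Rightarrow> nat \<Rightarrow> real" where "EL m l = (\<Sum>k\<le>m. FF m k * real (k choose l))"

lemma EL_rec: "2*real (Suc (Suc l))*real (Suc l)*EL m (Suc (Suc l)) = (4*real m+2)*real (Suc l)*EL m (Suc l) + 2*(real l - real m)*(real l+real m+1)*EL m l"
proof -
  have "2*real (Suc (Suc l))*real (Suc l)*EL m (Suc (Suc l)) - (4*real m+2)*real (Suc l)*EL m (Suc l) - 2*(real l - real m)*(real l+real m+1)*EL m l = (\<Sum>k\<le>m. tt m l k * gg m l k)"
    unfolding EL_def sum_distrib_left sum_subtractf[symmetric] perkE ..
  then show ?thesis unfolding sumA by simp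
qed




definition Qs :: "nat \<Rightarrow> nat \<Rightarrow> real" where
  "Qs m n = (\<Prod>i<n. 2*real m - 2*real i + 1)"
definition Tg :: "(nat \<Rightarrow> real) \<Rightarrow> (nat \<Rightarrow> real) \<Rightarrow> nat \<Rightarrow> real" where
  "Tg s Q l = (\<Sum>j\<le>l. real (l choose j) * s j * Q (l-j))"

lemma Qs_Suc: "Qs m (Suc n) = Qs m n * (2*real m - 2*real n + 1)"
  by (simp add: Qs_def)

lemma Tg_Suc: "Tg s Q (Suc l) = Tg s (\<lambda>n. Q (Suc n)) l + Tg (\<lambda>j. s (Suc j)) Q l"
proof -
  define X where "X = (\<Sum>j\<le>l. real (l choose Suc j) * s (Suc j) * Q (l - j))"
  have a: "Tg s Q (Suc l) = s 0 * Q (Suc l) + (\<Sum>j\<le>l. real (Suc l choose Suc j) * s (Suc j) * Q (l - j))"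
    unfolding Tg_def sum.atMost_Suc_shift by simp
  have b: "(\<Sum>j\<le>l. real (Suc l choose Suc j) * s (Suc j) * Q (l - j)) = X + Tg (\<lambda>j. s (Suc j)) Q l"
    unfolding Tg_def X_def sum.distrib[symmetric] by (rule sum.cong[OF refl]) (simp add: binomial_Suc_Suc algebra_simps)
  have c: "s 0 * Q (Suc l) + X = (\<Sum>j\<le>Suc l. real (l choose j) * s j * Q (Suc l - j))"
    unfolding sum.atMost_Suc_shift X_def by simp
  have d: "(\<Sum>j\<le>Suc l. real (l choose j) * s j * Q (Suc l - j)) = Tg s (\<lambda>n. Q (Suc n)) l"
    unfolding Tg_def sum.atMost_Suc
    by (simp add: Suc_diff_le)
  show ?thesis unfolding a b using c d by simp
qed

lemma Kl: "(\<Sum>j\<le>l. real (l choose j)*(real l - real j)*s (Suc j)*Q (l-j)) = (\<Sum>j\<le>l. real (l choose j)*real j*s j*Q (Suc (l-j)))"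
proof -
  define f where "f j = real (l choose j)*real j*s j*Q (Suc l - j)" for j
  have "(\<Sum>j\<le>l. real (l choose j)*real j*s j*Q (Suc (l-j))) = (\<Sum>j\<le>l. f j)"
    unfolding f_def by (rule sum.cong[OF refl]) (simp add: Suc_diff_le)
  also have "\<dots> = (\<Sum>j\<le>Suc l. f j)" by (simp add: f_def)
  also have "\<dots> = (\<Sum>j\<le>l. f (Suc j))" unfolding sum.atMost_Suc_shift by (simp add: f_def)
  also have "\<dots> = (\<Sum>j\<le>l. real (l choose j)*(real l - real j)*s (Suc j)*Q (l-j))"
  proof (rule sum.cong[OF refl])
    fix j assume "j \<in> {..l}"
    have e: "f (Suc j) = (real (Suc j) * real (l choose Suc j)) * (s (Suc j) * Q (l-j))"
      unfolding f_def by (simp only: diff_Suc_Suc mult_ac)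
    show "f (Suc j) = real (l choose j)*(real l - real j)*s (Suc j)*Q (l-j)"
      unfolding e r4 by (simp only: mult_ac)
  qed
  finally show ?thesis ..
qed

lemma T_rec:
  assumes step: "\<And>j. s (Suc (Suc j)) = (4*real m+2*real j+3)*(2*real j+1)*s j"
  shows "Tg s (Qs m) (Suc (Suc l)) = 2*(2*real m+1)*Tg s (Qs m) (Suc l) + 4*(real l - real m)*(real l+real m+1)*Tg s (Qs m) l"
proof -
  define Q where "Q = Qs m"
  define c where "c = 4*(real l - real m)*(real l+real m+1)"
  have t2: "Tg s Q (Suc (Suc l)) = Tg s (\<lambda>n. Q (Suc (Suc n))) l + 2*Tg (\<lambda>j. s (Suc j)) (\<lambda>n. Q (Suc n)) l + Tg (\<lambda>j. s (Suc (Suc j))) Q l"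
    unfolding Tg_Suc by simp
  have t1: "Tg s Q (Suc l) = Tg s (\<lambda>n. Q (Suc n)) l + Tg (\<lambda>j. s (Suc j)) Q l"
    unfolding Tg_Suc by simp
  have "Tg s Q (Suc (Suc l)) - 2*(2*real m+1)*Tg s Q (Suc l) - c*Tg s Q l
     = (\<Sum>j\<le>l. real (l choose j) * s j * Q (Suc (Suc (l-j))) + 2*(real (l choose j) * s (Suc j) * Q (Suc (l-j)))
          + real (l choose j) * s (Suc (Suc j)) * Q (l-j)
          - 2*(2*real m+1)*(real (l choose j) * s j * Q (Suc (l-j)) + real (l choose j) * s (Suc j) * Q (l-j))
          - c*(real (l choose j) * s j * Q (l-j)))"
    unfolding t2 t1 by (simp only: Tg_def) (simp add: sum.distrib sum_subtractf sum_distrib_left distrib_left)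
  also have "\<dots> = (\<Sum>j\<le>l. 4*(real (l choose j)*real j*s j*Q (Suc (l-j))))
       - (\<Sum>j\<le>l. 4*(real (l choose j)*(real l - real j)*s (Suc j)*Q (l-j)))"
    unfolding sum_subtractf[symmetric]
  proof (rule sum.cong[OF refl])
    fix j assume "j \<in> {..l}"
    hence jl: "j \<le> l" by simp
    define n where "n = l - j"
    have rn: "real n = real l - real j" unfolding n_def using jl by (simp add: of_nat_diff)
    have q1: "Q (Suc n) = Q n * (2*real m - 2*(real l - real j) + 1)" unfolding Q_def Qs_Suc rn ..
    have q2: "Q (Suc (Suc n)) = Q n * (2*real m - 2*(real l - real j) + 1) * (2*real m - 2*(real l - real j + 1) + 1)"
      unfolding Q_def Qs_Suc[of m "Suc n"] q1[unfolded Q_def] of_nat_Suc rn by (simp add: algebra_simps)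
    show "real (l choose j) * s j * Q (Suc (Suc (l-j))) + 2*(real (l choose j) * s (Suc j) * Q (Suc (l-j)))
          + real (l choose j) * s (Suc (Suc j)) * Q (l-j)
          - 2*(2*real m+1)*(real (l choose j) * s j * Q (Suc (l-j)) + real (l choose j) * s (Suc j) * Q (l-j))
          - c*(real (l choose j) * s j * Q (l-j))
          = 4*(real (l choose j)*real j*s j*Q (Suc (l-j))) - 4*(real (l choose j)*(real l - real j)*s (Suc j)*Q (l-j))"
      unfolding n_def[symmetric] q1 q2 step c_def by (simp add: algebra_simps)
  qed
  also have "\<dots> = 0" unfolding sum_distrib_left[symmetric] Kl by simp
  finally show ?thesis unfolding Q_def c_def by simp
qed




lemma prod_up: "(\<Prod>\<nu>\<in>{int a + 1..int a + int n}. f \<nu>) = (\<Prod>i<n. f (int a + 1 + int i))"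
proof (induction n)
  case 0 then show ?case by simp
next
  case (Suc n)
  have "{int a + 1..int a + int (Suc n)} = insert (int a + 1 + int n) {int a + 1..int a + int n}" by auto
  then show ?case using Suc by (simp add: mult.commute)
qed

lemma prod_down: "(\<Prod>\<nu>\<in>{int m - int n + 1..int m}. f \<nu>) = (\<Prod>i<n. f (int m - int i))"
proof (induction n)
  case 0 then show ?case by simp
next
  case (Suc n)
  have "{int m - int (Suc n) + 1..int m} = insert (int m - int n) {int m - int n + 1..int m}" by auto
  then show ?case using Suc by (simp add: mult.commute)
qed

definition PA :: "nat \<Rightarrow> nat \<Rightarrow> real" where "PA m t = (\<Prod>i<t. 4*real m + 4*real i + 3)"
definition CA :: "nat \<Rightarrow> real" where "CA t = (\<Prod>i<t-1. 4*real i + 5)"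
definition PB :: "nat \<Rightarrow> nat \<Rightarrow> real" where "PB m t = (\<Prod>i<t-1. 4*real m + 4*real i + 5)"
definition CB :: "nat \<Rightarrow> real" where "CB t = (\<Prod>i<t-1. 4*real i + 3)"

lemma alpha_alt: "alpha l m = (\<Sum>t=0..l div 2. real (l choose (2*t)) * PA m t * Qs m (l-2*t) * CA t)"
  unfolding alpha_def
proof (rule sum.cong[OF refl])
  fix t assume "t \<in> {0..l div 2}"
  hence tl: "2*t \<le> l" by auto
  have a: "(\<Prod>\<nu>\<in>{int m + 1 .. int m + int t}. real_of_int (4*\<nu> - 1)) = PA m t"
    unfolding prod_up PA_def by (rule prod.cong[OF refl]) simp
  have e2: "int m - int l + 2 * int t + 1 = int m - int (l - 2*t) + 1" using tl by simp
  have b: "(\<Prod>\<nu>\<in>{int m - int l + 2 * int t + 1 .. int m}. real_of_int (2*\<nu> + 1)) = Qs m (l-2*t)"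
    unfolding e2 prod_down Qs_def by (rule prod.cong[OF refl]) simp
  have e3: "{1 .. int t - 1} = {int 0 + 1 .. int 0 + int (t-1)}" by (cases t) auto
  have c: "(\<Prod>\<nu>\<in>{1 .. int t - 1}. real_of_int (4*\<nu> + 1)) = CA t"
    unfolding e3 prod_up CA_def by (rule prod.cong[OF refl]) simp
  show "real (l choose (2*t))
     * (\<Prod>\<nu>\<in>{int m + 1 .. int m + int t}. real_of_int (4*\<nu> - 1))
     * (\<Prod>\<nu>\<in>{int m - int l + 2 * int t + 1 .. int m}. real_of_int (2*\<nu> + 1))
     * (\<Prod>\<nu>\<in>{1 .. int t - 1}. real_of_int (4*\<nu> + 1)) = real (l choose (2*t)) * PA m t * Qs m (l-2*t) * CA t"
    unfolding a b c ..
qed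

lemma beta_alt: "beta l m = (\<Sum>t=1..(l+1) div 2. real (l choose (2*t-1)) * PB m t * Qs m (l-(2*t-1)) * CB t)"
  unfolding beta_def
proof (rule sum.cong[OF refl])
  fix t assume "t \<in> {1..(l+1) div 2}"
  hence tl: "2*t \<le> l+1" "1 \<le> t" by auto
  have e1: "{int m + 1 .. int m + int t - 1} = {int m + 1 .. int m + int (t-1)}" using tl by auto
  have a: "(\<Prod>\<nu>\<in>{int m + 1 .. int m + int t - 1}. real_of_int (4*\<nu> + 1)) = PB m t"
    unfolding e1 prod_up PB_def by (rule prod.cong[OF refl]) simp
  have e2: "int m - int l + 2 * int t = int m - int (l - (2*t-1)) + 1" using tl by simp
  have b: "(\<Prod>\<nu>\<in>{int m - int l + 2 * int t .. int m}. real_of_int (2*\<nu> + 1)) = Qs m (l-(2*t-1))"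
    unfolding e2 prod_down Qs_def by (rule prod.cong[OF refl]) simp
  have e3: "{1 .. int t - 1} = {int 0 + 1 .. int 0 + int (t-1)}" by (cases t) auto
  have c: "(\<Prod>\<nu>\<in>{1 .. int t - 1}. real_of_int (4*\<nu> - 1)) = CB t"
    unfolding e3 prod_up CB_def by (rule prod.cong[OF refl]) simp
  show "real (l choose (2*t - 1))
     * (\<Prod>\<nu>\<in>{int m + 1 .. int m + int t - 1}. real_of_int (4*\<nu> + 1))
     * (\<Prod>\<nu>\<in>{int m - int l + 2 * int t .. int m}. real_of_int (2*\<nu> + 1))
     * (\<Prod>\<nu>\<in>{1 .. int t - 1}. real_of_int (4*\<nu> - 1)) = real (l choose (2*t-1)) * PB m t * Qs m (l-(2*t-1)) * CB t"
    unfolding a b c ..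
qed

lemma sum_even:
  fixes f :: "nat \<Rightarrow> real" and l :: nat
  assumes "\<And>j. odd j \<Longrightarrow> f j = 0"
  shows "(\<Sum>j\<le>l. f j) = (\<Sum>t=0..l div 2. (f (2*t)::real))"
proof -
  have inj: "inj_on (\<lambda>t. 2*t) {0..l div 2}" by (auto simp: inj_on_def)
  have "(\<Sum>t=0..l div 2. f (2*t)) = sum f ((\<lambda>t. 2*t) ` {0..l div 2})"
    using sum.reindex[OF inj, of f] by simp
  also have "\<dots> = sum f {..l}"
  proof (rule sum.mono_neutral_left)
    show "(\<lambda>t. 2*t) ` {0..l div 2} \<subseteq> {..l}" by auto
    show "\<forall>i\<in>{..l} - (\<lambda>t. 2*t) ` {0..l div 2}. f i = 0"
    proof
      fix i assume i: "i \<in> {..l} - (\<lambda>t. 2*t) ` {0..l div 2}"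
      have "odd i"
      proof
        assume "even i"
        hence "i = 2*(i div 2)" by simp
        moreover have "i div 2 \<in> {0..l div 2}" using i by (auto intro: div_le_mono)
        ultimately show False using i by blast
      qed
      then show "f i = 0" by (rule assms)
    qed
  qed simp
  finally show ?thesis ..
qed

lemma sum_odd:
  fixes f :: "nat \<Rightarrow> real" and l :: nat
  assumes "\<And>j. even j \<Longrightarrow> f j = 0"
  shows "(\<Sum>j\<le>l. f j) = (\<Sum>t=1..(l+1) div 2. (f (2*t-1)::real))"
proof -
  have inj: "inj_on (\<lambda>t. 2*t-1) {1..(l+1) div 2}" by (auto simp: inj_on_def)
  have "(\<Sum>t=1..(l+1) div 2. f (2*t-1)) = sum f ((\<lambda>t. 2*t-1) ` {1..(l+1) div 2})"
    using sum.reindex[OF inj, of f] by simp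
  also have "\<dots> = sum f {..l}"
  proof (rule sum.mono_neutral_left)
    show "(\<lambda>t. 2*t-1) ` {1..(l+1) div 2} \<subseteq> {..l}" by auto
    show "\<forall>i\<in>{..l} - (\<lambda>t. 2*t-1) ` {1..(l+1) div 2}. f i = 0"
    proof
      fix i assume i: "i \<in> {..l} - (\<lambda>t. 2*t-1) ` {1..(l+1) div 2}"
      have "even i"
      proof (rule ccontr)
        assume "\<not> even i"
        hence o: "odd i" by simp
        hence "i = 2*((i+1) div 2) - 1" by presburger
        moreover have "(i+1) div 2 \<in> {1..(l+1) div 2}"
        proof -
          have il: "i \<le> l" using i by simp
          have "(i+1) div 2 \<le> (l+1) div 2" by (rule div_le_mono) (simp add: il)
          moreover have "1 \<le> (i+1) div 2" using o by presburger
          ultimately show ?thesis by simp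
        qed
        ultimately show False using i by blast
      qed
      then show "f i = 0" by (rule assms)
    qed
  qed simp
  finally show ?thesis ..
qed

definition sa :: "nat \<Rightarrow> nat \<Rightarrow> real" where
  "sa m j = (if even j then PA m (j div 2) * CA (j div 2) else 0)"
definition sb :: "nat \<Rightarrow> nat \<Rightarrow> real" where
  "sb m j = (if odd j then PB m ((j+1) div 2) * CB ((j+1) div 2) else 0)"

lemma alpha_T: "alpha l m = Tg (sa m) (Qs m) l"
  unfolding alpha_alt Tg_def
  by (subst sum_even) (auto simp: sa_def mult_ac)

lemma beta_T: "beta l m = Tg (sb m) (Qs m) l"
  unfolding beta_alt Tg_def
  by (subst sum_odd) (auto simp: sb_def mult_ac)




lemma sa_step: "sa m (Suc (Suc j)) = (4*real m+2*real j+3)*(2*real j+1)*sa m j"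
proof (cases "even j")
  case True
  then obtain t where j: "j = 2*t" by blast
  have d: "Suc (Suc j) div 2 = Suc t" "j div 2 = t" using j by auto
  have pa: "PA m (Suc t) = PA m t * (4*real m + 4*real t + 3)" by (simp add: PA_def)
  have ca: "CA (Suc t) = CA t * (4*real t + 1)"
  proof (cases t)
    case 0 then show ?thesis by (simp add: CA_def)
  next
    case (Suc t') then show ?thesis by (simp add: CA_def algebra_simps)
  qed
  show ?thesis using True unfolding sa_def d by (simp add: pa ca j algebra_simps)
next
  case False
  then show ?thesis by (simp add: sa_def)
qed

lemma sb_step: "sb m (Suc (Suc j)) = (4*real m+2*real j+3)*(2*real j+1)*sb m j"
proof (cases "odd j")
  case True
  then obtain t where j: "j = 2*t+1" by (metis oddE)
  have d: "(Suc (Suc j) + 1) div 2 = Suc (Suc t)" "(j+1) div 2 = Suc t" using j by auto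
  have pb: "PB m (Suc (Suc t)) = PB m (Suc t) * (4*real m + 4*real t + 5)" by (simp add: PB_def)
  have cb: "CB (Suc (Suc t)) = CB (Suc t) * (4*real t + 3)" by (simp add: CB_def)
  show ?thesis using True unfolding sb_def d by (simp add: pb cb j algebra_simps)
next
  case False
  then show ?thesis by (simp add: sb_def)
qed

lemma Ta0: "Tg (sa m) (Qs m) 0 = 1" by (simp add: Tg_def sa_def PA_def CA_def Qs_def)
lemma Ta1: "Tg (sa m) (Qs m) 1 = 2*real m+1" by (simp add: Tg_def sa_def PA_def CA_def Qs_def)
lemma Tb0: "Tg (sb m) (Qs m) 0 = 0" by (simp add: Tg_def sb_def)
lemma Tb1: "Tg (sb m) (Qs m) 1 = 1" by (simp add: Tg_def sb_def PB_def CB_def Qs_def)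

lemma dd_EL: "dd l m = EL m l / 2^(2*m)"
proof -
  have "(\<Sum>k = l..m. 2 ^ k * real ((2*m - 2*k) choose (m - k)) * real ((m + k) choose m) * real (k choose l))
      = (\<Sum>k\<le>m. FF m k * real (k choose l))"
    unfolding FF_def
    by (rule sum.mono_neutral_left) auto
  then show ?thesis unfolding dd_def EL_def by simp
qed

lemma EL0: "EL m 0 = E0 m" by (simp add: EL_def E0_def)
lemma EL1: "2 * EL m 1 = (2*real m+1) * E0 m - Y0 m"
  unfolding EL_def E0_def Y0_def sum_distrib_left sum_subtractf[symmetric]
  by (rule sum.cong[OF refl]) (simp add: algebra_simps)

definition VV :: "nat \<Rightarrow> nat \<Rightarrow> real" where
  "VV m l = fact l * fact m * 2^(m+l) * dd l m"

lemma VV_rec: "VV m (Suc (Suc l)) = 2*(2*real m+1)*VV m (Suc l) + 4*(real l - real m)*(real l+real m+1)*VV m l"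
proof -
  define K where "K = fact l * fact m * 2^(m+l+1) / (2::real)^(2*m)"
  have a: "VV m (Suc (Suc l)) = K * (2*real (Suc (Suc l))*real (Suc l)*EL m (Suc (Suc l)))"
    unfolding VV_def dd_EL K_def by (simp add: algebra_simps)
  have b: "VV m (Suc l) = K * (real (Suc l) * EL m (Suc l))"
    unfolding VV_def dd_EL K_def by (simp add: field_simps)
  have c: "VV m l = K * (EL m l / 2)"
    unfolding VV_def dd_EL K_def by (simp add: algebra_simps)
  show ?thesis unfolding a b c EL_rec by (simp add: algebra_simps)
qed

lemma VV0: "VV m 0 = (\<Prod>k=1..m. real (4*k-1))"
proof -
  have "VV m 0 = (fact m * E0 m) * 2^m / 2^(2*m)" unfolding VV_def dd_EL EL0 by simp
  also have "\<dots> = (\<Prod>k=1..m. real (4*k-1))"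
  proof -
    have p: "(2::real)^(2*m) = 2^m * 2^m" by (simp add: power_add[symmetric] mult_2)
    have aux: "\<And>P a::real. P \<noteq> 0 \<Longrightarrow> (P*a)*P/(P*P) = a"
      by (simp add: field_simps)
    show ?thesis unfolding E0_closed p by (rule aux) simp
  qed
  finally show ?thesis .
qed

lemma VV1: "VV m 1 = (2*real m+1)*(\<Prod>k=1..m. real (4*k-1)) - (\<Prod>k=1..m. real (4*k+1))"
proof -
  have "VV m 1 = (fact m * (2 * EL m 1)) * 2^m / 2^(2*m)" unfolding VV_def dd_EL by (simp add: algebra_simps)
  also have "\<dots> = ((2*real m+1) * (fact m * E0 m) - fact m * Y0 m) * 2^m / 2^(2*m)"
    unfolding EL1 by (simp add: algebra_simps)
  also have "\<dots> = (2*real m+1)*(\<Prod>k=1..m. real (4*k-1)) - (\<Prod>k=1..m. real (4*k+1))"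
  proof -
    have p: "(2::real)^(2*m) = 2^m * 2^m" by (simp add: power_add[symmetric] mult_2)
    have aux: "\<And>P c a b::real. P \<noteq> 0 \<Longrightarrow> (c*(P*a) - P*b)*P/(P*P) = c*a - b"
      by (simp add: field_simps)
    show ?thesis unfolding E0_closed Y0_closed p by (rule aux) simp
  qed
  finally show ?thesis .
qed

lemma VV_main: "VV m l = alpha l m * (\<Prod>k=1..m. real (4*k-1)) - beta l m * (\<Prod>k=1..m. real (4*k+1))"
proof -
  define A where "A = (\<Prod>k=1..m. real (4*k-1))"
  define B where "B = (\<Prod>k=1..m. real (4*k+1))"
  define R where "R l = Tg (sa m) (Qs m) l * A - Tg (sb m) (Qs m) l * B" for l
  have "VV m l = R l \<and> VV m (Suc l) = R (Suc l)"
  proof (induction l)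
    case 0
    show ?case unfolding R_def using VV0[of m] VV1[of m]
      by (simp add: Ta0 Tb0 Ta1[simplified] Tb1[simplified] A_def B_def)
  next
    case (Suc l)
    have "VV m (Suc (Suc l)) = R (Suc (Suc l))"
      unfolding VV_rec Suc.IH[THEN conjunct1] Suc.IH[THEN conjunct2] R_def
        T_rec[of "sa m" m, OF sa_step] T_rec[of "sb m" m, OF sb_step]
      by (simp add: algebra_simps)
    then show ?case using Suc.IH by simp
  qed
  then show ?thesis unfolding R_def alpha_T beta_T A_def B_def by simp
qed

lemma part1: "dd l m = (1 / (fact l * fact m * 2 ^ (m + l))) *
              (alpha l m * (\<Prod>k = 1..m. real (4*k - 1))
               - beta l m * (\<Prod>k = 1..m. real (4*k + 1)))"
  unfolding VV_main[symmetric] VV_def by simp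

lemma alpha1: "alpha 1 m = 2*real m+1" using alpha_T[of 1 m] Ta1 by simp
lemma beta1: "beta 1 m = 1" using beta_T[of 1 m] Tb1 by simp

lemma part2: "fact m * 2 ^ (m + 1) * dd 1 m
              = real (2*m + 1) * (\<Prod>k = 1..m. real (4*k - 1)) - (\<Prod>k = 1..m. real (4*k + 1))"
  using VV_main[of m 1] unfolding VV_def alpha1 beta1 by (simp add: algebra_simps)




definition QQ :: "nat \<Rightarrow> real poly" where "QQ n = (\<Prod>i<n. [:1 - 2*real i, 2:])"
definition PPA :: "nat \<Rightarrow> real poly" where "PPA t = (\<Prod>i<t. [:4*real i + 3, 4:])"
definition PPB :: "nat \<Rightarrow> real poly" where "PPB t = (\<Prod>i<t-1. [:4*real i + 5, 4:])"

lemma deg_lin_prod: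
  assumes "\<And>i. b i \<noteq> (0::real)"
  shows "degree (\<Prod>i<n. [:a i, b i:]) = n \<and> (\<Prod>i<n. [:a i, b i:]) \<noteq> 0"
proof (induction n)
  case 0 then show ?case by simp
next
  case (Suc n)
  have nz: "[:a n, b n:] \<noteq> 0" using assms[of n] by simp
  have d1: "degree [:a n, b n:] = 1" using assms[of n] by simp
  define P where "P = (\<Prod>i<n. [:a i, b i:])"
  have e: "(\<Prod>i<Suc n. [:a i, b i:]) = P * [:a n, b n:]" unfolding P_def by (rule prod.lessThan_Suc)
  have Pnz: "P \<noteq> 0" and Pd: "degree P = n" using Suc.IH unfolding P_def by auto
  have "degree (P * [:a n, b n:]) = degree P + degree [:a n, b n:]" by (rule degree_mult_eq[OF Pnz nz])
  moreover have "P * [:a n, b n:] \<noteq> 0" using Pnz nz by (simp only: mult_eq_0_iff) auto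
  ultimately show ?case unfolding e Pd d1 by simp
qed

lemma deg_QQ: "degree (QQ n) = n" and QQ_nz: "QQ n \<noteq> 0"
  unfolding QQ_def using deg_lin_prod[of "\<lambda>i. 2" "\<lambda>i. 1 - 2*real i" n] by auto
lemma deg_PPA: "degree (PPA n) = n"
  unfolding PPA_def using deg_lin_prod[of "\<lambda>i. 4" "\<lambda>i. 4*real i + 3" n] by auto
lemma deg_PPB: "degree (PPB n) = n - 1"
  unfolding PPB_def using deg_lin_prod[of "\<lambda>i. 4" "\<lambda>i. 4*real i + 5" "n-1"] by auto

lemma poly_QQ: "poly (QQ n) (real m) = Qs m n"
  unfolding QQ_def Qs_def poly_prod by (rule prod.cong[OF refl]) (simp add: algebra_simps)
lemma poly_PPA: "poly (PPA t) (real m) = PA m t"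
  unfolding PPA_def PA_def poly_prod by (rule prod.cong[OF refl]) (simp add: algebra_simps)
lemma poly_PPB: "poly (PPB t) (real m) = PB m t"
  unfolding PPB_def PB_def poly_prod by (rule prod.cong[OF refl]) (simp add: algebra_simps)

definition pa :: "nat \<Rightarrow> real poly" where
  "pa l = (\<Sum>t=0..l div 2. smult (real (l choose (2*t)) * CA t) (PPA t * QQ (l-2*t)))"
definition pb :: "nat \<Rightarrow> real poly" where
  "pb l = (\<Sum>t=1..(l+1) div 2. smult (real (l choose (2*t-1)) * CB t) (PPB t * QQ (l-(2*t-1))))"

lemma poly_pa: "poly (pa l) (real m) = alpha l m"
  unfolding alpha_alt pa_def poly_sum
  by (rule sum.cong[OF refl]) (simp add: poly_PPA poly_QQ mult_ac)

lemma poly_pb: "poly (pb l) (real m) = beta l m"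
  unfolding beta_alt pb_def poly_sum
  by (rule sum.cong[OF refl]) (simp add: poly_PPB poly_QQ mult_ac)

lemma deg_pa: "degree (pa l) = l"
proof (cases "l = 0")
  case True
  then show ?thesis by (simp add: pa_def PPA_def QQ_def)
next
  case False
  define rest where "rest = (\<Sum>t=Suc 0..l div 2. smult (real (l choose (2*t)) * CA t) (PPA t * QQ (l-2*t)))"
  have split: "pa l = smult (real (l choose (2*0)) * CA 0) (PPA 0 * QQ (l-2*0)) + rest"
    unfolding pa_def rest_def by (rule sum.atLeast_Suc_atMost) simp
  have t0: "smult (real (l choose (2*0)) * CA 0) (PPA 0 * QQ (l-2*0)) = QQ l"
    by (simp add: CA_def PPA_def)
  have "degree rest \<le> l - 1"
    unfolding rest_def
  proof (rule degree_sum_le)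
    fix t assume t: "t \<in> {Suc 0..l div 2}"
    have "degree (smult (real (l choose (2*t)) * CA t) (PPA t * QQ (l-2*t))) \<le> degree (PPA t * QQ (l-2*t))"
      by (rule degree_smult_le)
    also have "\<dots> \<le> degree (PPA t) + degree (QQ (l-2*t))" by (rule degree_mult_le)
    also have "\<dots> \<le> l - 1" unfolding deg_PPA deg_QQ using t by auto
    finally show "degree (smult (real (l choose (2*t)) * CA t) (PPA t * QQ (l-2*t))) \<le> l - 1" .
  qed simp
  then have "degree rest < degree (QQ l)" unfolding deg_QQ using False by simp
  then show ?thesis unfolding split t0 by (simp add: degree_add_eq_left deg_QQ)
qed

lemma deg_pb: assumes "1 \<le> l" shows "degree (pb l) = l - 1"
proof -
  define rest where "rest = (\<Sum>t=Suc 1..(l+1) div 2. smult (real (l choose (2*t-1)) * CB t) (PPB t * QQ (l-(2*t-1))))"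
  have split: "pb l = smult (real (l choose (2*1-1)) * CB 1) (PPB 1 * QQ (l-(2*1-1))) + rest"
    unfolding pb_def rest_def by (rule sum.atLeast_Suc_atMost) (use assms in simp)
  have t1: "smult (real (l choose (2*1-1)) * CB 1) (PPB 1 * QQ (l-(2*1-1))) = smult (real l) (QQ (l-1))"
    by (simp add: CB_def PPB_def)
  have d1: "degree (smult (real l) (QQ (l-1))) = l - 1" using assms by (simp add: deg_QQ)
  show ?thesis
  proof (cases "l = 1")
    case True
    then have "rest = 0" unfolding rest_def by simp
    then show ?thesis unfolding split t1 using d1 by simp
  next
    case False
    have "degree rest \<le> l - 2"
      unfolding rest_def
    proof (rule degree_sum_le)
      fix t assume t: "t \<in> {Suc 1..(l+1) div 2}"
      have "degree (smult (real (l choose (2*t-1)) * CB t) (PPB t * QQ (l-(2*t-1)))) \<le> degree (PPB t * QQ (l-(2*t-1)))"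
        by (rule degree_smult_le)
      also have "\<dots> \<le> degree (PPB t) + degree (QQ (l-(2*t-1)))" by (rule degree_mult_le)
      also have "\<dots> \<le> l - 2" unfolding deg_PPB deg_QQ using t by auto
      finally show "degree (smult (real (l choose (2*t-1)) * CB t) (PPB t * QQ (l-(2*t-1)))) \<le> l - 2" .
    qed simp
    then have "degree rest < degree (smult (real l) (QQ (l-1)))" unfolding d1 using False assms by simp
    then show ?thesis unfolding split t1 using d1 by (simp add: degree_add_eq_left)
  qed
qed



theorem mainTheorem8:
  shows "(\<forall>l m. l \<le> m \<longrightarrow>
            dd l m = (1 / (fact l * fact m * 2 ^ (m + l))) *
              (alpha l m * (\<Prod>k = 1..m. real (4*k - 1))
               - beta l m * (\<Prod>k = 1..m. real (4*k + 1))))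
       \<and> (\<forall>m::nat. 1 \<le> m \<longrightarrow>
            fact m * 2 ^ (m + 1) * dd 1 m
              = real (2*m + 1) * (\<Prod>k = 1..m. real (4*k - 1)) - (\<Prod>k = 1..m. real (4*k + 1)))
       \<and> (\<forall>l. \<exists>p :: real poly. degree p = l \<and> (\<forall>m \<ge> l. alpha l m = poly p (real m)))
       \<and> (\<forall>l. 1 \<le> l \<longrightarrow>
            (\<exists>q :: real poly. degree q = l - 1 \<and> (\<forall>m \<ge> l. beta l m = poly q (real m))))"
proof -
  have 1: "\<forall>l m. l \<le> m \<longrightarrow>
            dd l m = (1 / (fact l * fact m * 2 ^ (m + l))) *
              (alpha l m * (\<Prod>k = 1..m. real (4*k - 1))
               - beta l m * (\<Prod>k = 1..m. real (4*k + 1)))" using part1 by blast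
  have 2: "\<forall>m::nat. 1 \<le> m \<longrightarrow>
            fact m * 2 ^ (m + 1) * dd 1 m
              = real (2*m + 1) * (\<Prod>k = 1..m. real (4*k - 1)) - (\<Prod>k = 1..m. real (4*k + 1))"
    using part2 by blast
  have 3: "\<forall>l. \<exists>p :: real poly. degree p = l \<and> (\<forall>m \<ge> l. alpha l m = poly p (real m))"
  proof
    fix l show "\<exists>p :: real poly. degree p = l \<and> (\<forall>m \<ge> l. alpha l m = poly p (real m))"
      by (rule exI[of _ "pa l"]) (simp add: deg_pa poly_pa)
  qed
  have 4: "\<forall>l. 1 \<le> l \<longrightarrow>
            (\<exists>q :: real poly. degree q = l - 1 \<and> (\<forall>m \<ge> l. beta l m = poly q (real m)))"
  proof (intro allI impI)
    fix l :: nat assume "1 \<le> l"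
    then show "\<exists>q :: real poly. degree q = l - 1 \<and> (\<forall>m \<ge> l. beta l m = poly q (real m))"
      by (intro exI[of _ "pb l"]) (simp add: deg_pb poly_pb)
  qed
  show ?thesis using 1 2 3 4 by blast
qed

end
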